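(* For every $h\ge1$, $\mathsf{sumPI}(\mathrm{MAJ}_h)=\mathsf{maxPI}(\mathrm{MAJ}_h)=2^h$.
   Context: $\mathrm{MAJ}_h:\{0,1\}^{3^h}\to\{0,1\}$ is the recursive majority of three function: the function computed by a complete ternary tree of depth $h$ whose internal nodes are majority-of-three gates and whose leaves are the input bits. For $f:\{0,1\}^N\to\{0,1\}$, with $p=\{p_x\}$ ranging over families of probability distributions on $[N]$, $$\mathsf{sumPI}(f)=\min_{p}\ \max_{x,y:\ f(x)\neq f(y)} \frac{1}{\sum_{i:\,x_i\neq y_i}\sqrt{p_x(i)p_y(i)}},\qquad \mathsf{maxPI}(f)=\min_{p}\ \max_{x,y:\ f(x)\neq f(y)} \frac{1}{\max_{i:\,x_i\neq y_i}\sqrt{p_x(i)p_y(i)}}.$$ *)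

theory Defs
  imports Complex_Main "HOL-Library.Extended_Real"
begin

text \<open>Boolean functions on N bits are functions on bool lists; only lists of
  length N are considered inputs.\<close>

definition maj3 :: "bool \<Rightarrow> bool \<Rightarrow> bool \<Rightarrow> bool" where
  "maj3 a b c = ((a \<and> b) \<or> (a \<and> c) \<or> (b \<and> c))"

fun MAJ :: "nat \<Rightarrow> bool list \<Rightarrow> bool" where
  "MAJ 0 x = x ! 0"
| "MAJ (Suc h) x = maj3 (MAJ h (take (3^h) x))
                        (MAJ h (take (3^h) (drop (3^h) x)))
                        (MAJ h (drop (2 * 3^h) x))"

definition prob_families :: "nat \<Rightarrow> (bool list \<Rightarrow> nat \<Rightarrow> real) set" where
  "prob_families N = {p. \<forall>x. length x = N \<longrightarrow>
       (\<forall>i<N. 0 \<le> p x i) \<and> (\<Sum>i<N. p x i) = 1}"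

definition diff_pairs :: "nat \<Rightarrow> (bool list \<Rightarrow> bool) \<Rightarrow> (bool list \<times> bool list) set" where
  "diff_pairs N f = {(x, y). length x = N \<and> length y = N \<and> f x \<noteq> f y}"

definition diff_idx :: "nat \<Rightarrow> bool list \<Rightarrow> bool list \<Rightarrow> nat set" where
  "diff_idx N x y = {i. i < N \<and> x ! i \<noteq> y ! i}"

text \<open>Values in extended reals; 1/0 is read as infinity (ereal inverse 0 = \<infinity>).\<close>
definition sumPI :: "nat \<Rightarrow> (bool list \<Rightarrow> bool) \<Rightarrow> ereal" where
  "sumPI N f = (INF p \<in> prob_families N. SUP xy \<in> diff_pairs N f.
      inverse (ereal (\<Sum>i\<in>diff_idx N (fst xy) (snd xy).
                        sqrt (p (fst xy) i * p (snd xy) i))))"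

definition maxPI :: "nat \<Rightarrow> (bool list \<Rightarrow> bool) \<Rightarrow> ereal" where
  "maxPI N f = (INF p \<in> prob_families N. SUP xy \<in> diff_pairs N f.
      inverse (SUP i \<in> diff_idx N (fst xy) (snd xy).
                        ereal (sqrt (p (fst xy) i * p (snd xy) i))))"

end

theory Submission
  imports Defs
begin

fun cert :: "nat \<Rightarrow> bool list \<Rightarrow> nat set" where
  "cert 0 x = {0}"
| "cert (Suc h) x = (let a = take (3^h) x; b = take (3^h) (drop (3^h) x); c = drop (2*3^h) x;
     A = cert h a; B = (+) (3^h) ` cert h b; C = (+) (2*3^h) ` cert h c in
     if MAJ h a = MAJ h b then A \<union> B else if MAJ h a = MAJ h c then A \<union> C else B \<union> C)"

fun bal :: "nat \<Rightarrow> bool list \<Rightarrow> bool" where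
  "bal 0 x = True"
| "bal (Suc h) x = (let a = take (3^h) x; b = take (3^h) (drop (3^h) x); c = drop (2*3^h) x in
     bal h a \<and> bal h b \<and> bal h c \<and> \<not> (MAJ h a = MAJ h b \<and> MAJ h b = MAJ h c))"

lemma split3:
  assumes "length x = 3^Suc h"
  shows "\<exists>a b c. x = a @ b @ c \<and> length a = 3^h \<and> length b = 3^h \<and> length c = 3^h"
proof (intro exI conjI)
  show "x = take (3^h) x @ take (3^h) (drop (3^h) x) @ drop (2*3^h) x"
    by (metis append_take_drop_id drop_drop mult_2 add.commute)
qed (use assms in auto)

lemma MAJ_app: "length a = 3^h \<Longrightarrow> length b = 3^h \<Longrightarrow> length c = 3^h \<Longrightarrow>
  MAJ (Suc h) (a @ b @ c) = maj3 (MAJ h a) (MAJ h b) (MAJ h c)"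
  by simp

lemma cert_app: "length a = 3^h \<Longrightarrow> length b = 3^h \<Longrightarrow> length c = 3^h \<Longrightarrow>
  cert (Suc h) (a @ b @ c) = (if MAJ h a = MAJ h b then cert h a \<union> (+) (3^h) ` cert h b
     else if MAJ h a = MAJ h c then cert h a \<union> (+) (2*3^h) ` cert h c
     else (+) (3^h) ` cert h b \<union> (+) (2*3^h) ` cert h c)"
  by (simp add: Let_def)

lemma bal_app: "length a = 3^h \<Longrightarrow> length b = 3^h \<Longrightarrow> length c = 3^h \<Longrightarrow>
  bal (Suc h) (a @ b @ c) = (bal h a \<and> bal h b \<and> bal h c \<and> \<not> (MAJ h a = MAJ h b \<and> MAJ h b = MAJ h c))"
  by (simp add: Let_def)

lemma cert_props: "length x = 3^h \<Longrightarrow> cert h x \<subseteq> {..<3^h} \<and> card (cert h x) = 2^h"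
proof (induction h arbitrary: x)
  case 0 then show ?case by simp
next
  case (Suc h)
  obtain a b c where x: "x = a @ b @ c" and l: "length a = 3^h" "length b = 3^h" "length c = 3^h"
    using split3[OF Suc.prems] by blast
  have A: "cert h a \<subseteq> {..<3^h}" "card (cert h a) = 2^h" using Suc.IH l by auto
  have B: "(+) (3^h) ` cert h b \<subseteq> {3^h..<2*3^h}" "card ((+) (3^h) ` cert h b) = 2^h"
    using Suc.IH[of b] l by (auto simp: card_image)
  have C: "(+) (2*3^h) ` cert h c \<subseteq> {2*3^h..<3*3^h}" "card ((+) (2*3^h) ` cert h c) = 2^h"
    using Suc.IH[of c] l by (auto simp: card_image)
  have fA: "finite (cert h a)" using A(1) finite_subset by blast
  have fB: "finite ((+) (3^h) ` cert h b)" using B(1) finite_subset by blast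
  have fC: "finite ((+) (2*3^h) ` cert h c)" using C(1) finite_subset by blast
  have d1: "cert h a \<inter> (+) (3^h) ` cert h b = {}" using A(1) B(1) by fastforce
  have d2: "cert h a \<inter> (+) (2*3^h) ` cert h c = {}" using A(1) C(1) by fastforce
  have d3: "(+) (3^h) ` cert h b \<inter> (+) (2*3^h) ` cert h c = {}" using B(1) C(1) by fastforce
  show ?case unfolding x cert_app[OF l]
    using A B C fA fB fC d1 d2 d3 by (auto simp: card_Un_disjoint)
qed

lemma cert_inter: "length x = 3^h \<Longrightarrow> length y = 3^h \<Longrightarrow> MAJ h x \<noteq> MAJ h y \<Longrightarrow>
  \<exists>i \<in> cert h x \<inter> cert h y. x ! i \<noteq> y ! i"
proof (induction h arbitrary: x y)
  case 0 then show ?case by simp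
next
  case (Suc h)
  obtain a b c where x: "x = a @ b @ c" and l: "length a = 3^h" "length b = 3^h" "length c = 3^h"
    using split3[OF Suc.prems(1)] by blast
  obtain a' b' c' where y: "y = a' @ b' @ c'" and l': "length a' = 3^h" "length b' = 3^h" "length c' = 3^h"
    using split3[OF Suc.prems(2)] by blast
  have IA: "MAJ h a \<noteq> MAJ h a' \<Longrightarrow> \<exists>i\<in>cert h a \<inter> cert h a'. x ! i \<noteq> y ! i"
  proof -
    assume "MAJ h a \<noteq> MAJ h a'"
    then obtain i where "i \<in> cert h a \<inter> cert h a'" "a ! i \<noteq> a' ! i" using Suc.IH[of a a'] l l' by auto
    moreover have "i < 3^h" using cert_props[of a h] l calculation by auto
    ultimately show ?thesis using l l' by (auto simp: x y nth_append)
  qed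
  have IB: "MAJ h b \<noteq> MAJ h b' \<Longrightarrow> \<exists>i\<in>(+) (3^h) ` cert h b \<inter> (+) (3^h) ` cert h b'. x ! i \<noteq> y ! i"
  proof -
    assume "MAJ h b \<noteq> MAJ h b'"
    then obtain i where "i \<in> cert h b \<inter> cert h b'" "b ! i \<noteq> b' ! i" using Suc.IH[of b b'] l l' by auto
    moreover have "i < 3^h" using cert_props[of b h] l calculation by auto
    ultimately show ?thesis using l l' by (intro bexI[of _ "3^h+i"]) (auto simp: x y nth_append)
  qed
  have IC: "MAJ h c \<noteq> MAJ h c' \<Longrightarrow> \<exists>i\<in>(+) (2*3^h) ` cert h c \<inter> (+) (2*3^h) ` cert h c'. x ! i \<noteq> y ! i"
  proof -
    assume "MAJ h c \<noteq> MAJ h c'"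
    then obtain i where "i \<in> cert h c \<inter> cert h c'" "c ! i \<noteq> c' ! i" using Suc.IH[of c c'] l l' by auto
    moreover have "i < 3^h" using cert_props[of c h] l calculation by auto
    ultimately show ?thesis using l l' by (intro bexI[of _ "2*3^h+i"]) (auto simp: x y nth_append)
  qed
  have M: "maj3 (MAJ h a) (MAJ h b) (MAJ h c) \<noteq> maj3 (MAJ h a') (MAJ h b') (MAJ h c')"
    using Suc.prems(3) unfolding x y MAJ_app[OF l] MAJ_app[OF l'] .
  show ?case unfolding x y cert_app[OF l] cert_app[OF l'] unfolding x[symmetric] y[symmetric]
    using IA IB IC M unfolding maj3_def
    by (cases "MAJ h a"; cases "MAJ h b"; cases "MAJ h c"; cases "MAJ h a'"; cases "MAJ h b'"; cases "MAJ h c'") (simp_all, blast+)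
qed

lemma bal_flip: "length x = 3^h \<Longrightarrow> bal h x \<Longrightarrow> i \<in> cert h x \<Longrightarrow>
  bal h (x[i := \<not> x!i]) \<and> MAJ h (x[i := \<not> x!i]) \<noteq> MAJ h x \<and> i \<in> cert h (x[i := \<not> x!i])"
proof (induction h arbitrary: x i)
  case 0 then show ?case by (cases x) auto
next
  case (Suc h)
  obtain a b c where x: "x = a @ b @ c" and l: "length a = 3^h" "length b = 3^h" "length c = 3^h"
    using split3[OF Suc.prems(1)] by blast
  have bl: "bal h a" "bal h b" "bal h c" "\<not> (MAJ h a = MAJ h b \<and> MAJ h b = MAJ h c)"
    using Suc.prems(2) unfolding x bal_app[OF l] by auto
  have ic: "i \<in> (if MAJ h a = MAJ h b then cert h a \<union> (+) (3^h) ` cert h b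
     else if MAJ h a = MAJ h c then cert h a \<union> (+) (2*3^h) ` cert h c
     else (+) (3^h) ` cert h b \<union> (+) (2*3^h) ` cert h c)"
    using Suc.prems(3) unfolding x cert_app[OF l] .
  consider (A) "i \<in> cert h a" "MAJ h a = MAJ h b \<or> MAJ h a = MAJ h c"
    | (B) j where "i = 3^h + j" "j \<in> cert h b" "MAJ h a = MAJ h b \<or> MAJ h a \<noteq> MAJ h c"
    | (C) j where "i = 2*3^h + j" "j \<in> cert h c" "MAJ h a \<noteq> MAJ h b"
    using ic by (auto split: if_splits)
  then show ?case
  proof cases
    case A
    have il: "i < 3^h" using cert_props[of a h] l A by auto
    define a' where "a' = a[i := \<not> a!i]"
    have la: "length a' = 3^h" using l by (simp add: a'_def)
    have e: "x[i := \<not> x!i] = a' @ b @ c" using il l by (simp add: x a'_def nth_append list_update_append)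
    have IH: "bal h a' \<and> MAJ h a' \<noteq> MAJ h a \<and> i \<in> cert h a'" using Suc.IH[of a i] l bl A by (simp add: a'_def)
    show ?thesis unfolding e bal_app[OF la l(2,3)] MAJ_app[OF la l(2,3)] cert_app[OF la l(2,3)]
      unfolding x MAJ_app[OF l] using IH bl A unfolding maj3_def by auto
  next
    case (B j)
    have il: "j < 3^h" using cert_props[of b h] l B by auto
    define b' where "b' = b[j := \<not> b!j]"
    have lb: "length b' = 3^h" using l by (simp add: b'_def)
    have e: "x[i := \<not> x!i] = a @ b' @ c" using il l B(1) by (simp add: x b'_def nth_append list_update_append)
    have IH: "bal h b' \<and> MAJ h b' \<noteq> MAJ h b \<and> j \<in> cert h b'" using Suc.IH[of b j] l bl B by (simp add: b'_def)
    show ?thesis unfolding e bal_app[OF l(1) lb l(3)] MAJ_app[OF l(1) lb l(3)] cert_app[OF l(1) lb l(3)]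
      unfolding x MAJ_app[OF l] using IH bl B unfolding maj3_def by auto
  next
    case (C j)
    have il: "j < 3^h" using cert_props[of c h] l C by auto
    define c' where "c' = c[j := \<not> c!j]"
    have lc: "length c' = 3^h" using l by (simp add: c'_def)
    have e: "x[i := \<not> x!i] = a @ b @ c'" using il l C(1) by (simp add: x c'_def nth_append list_update_append)
    have IH: "bal h c' \<and> MAJ h c' \<noteq> MAJ h c \<and> j \<in> cert h c'" using Suc.IH[of c j] l bl C by (simp add: c'_def)
    show ?thesis unfolding e bal_app[OF l(1,2) lc] MAJ_app[OF l(1,2) lc] cert_app[OF l(1,2) lc]
      unfolding x MAJ_app[OF l] using IH bl C unfolding maj3_def by auto
  qed
qed

lemma bal_exists: "\<exists>x. length x = 3^h \<and> bal h x \<and> MAJ h x = v"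
proof (induction h arbitrary: v)
  case 0 show ?case by (intro exI[of _ "[v]"]) simp
next
  case (Suc h)
  obtain x where x: "length x = 3^h" "bal h x" "MAJ h x = v" using Suc.IH by blast
  obtain y where y: "length y = 3^h" "bal h y" "MAJ h y = (\<not> v)" using Suc.IH by blast
  show ?case using x y by (intro exI[of _ "x @ x @ y"]) (simp add: bal_app MAJ_app maj3_def)
qed



lemma lower_pair:
  assumes p: "p \<in> prob_families (3^h)"
  shows "\<exists>x i. length x = 3^h \<and> i < 3^h \<and> MAJ h (x[i := \<not> x!i]) \<noteq> MAJ h x \<and>
            sqrt (p x i * p (x[i := \<not> x!i]) i) \<le> 1 / 2^h"
proof -
  define N :: nat where "N = 3^h"
  define B where "B = {x. length x = N \<and> bal h x}"
  define P where "P = Sigma B (cert h)"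
  define fl where "fl = (\<lambda>(x::bool list, i::nat). (x[i := \<not> x!i], i))"
  define g where "g = (\<lambda>(x::bool list, i::nat). sqrt (p x i * p (x[i := \<not> x!i]) i))"
  have pn: "\<And>x i. length x = N \<Longrightarrow> i < N \<Longrightarrow> 0 \<le> p x i" and ps: "\<And>x. length x = N \<Longrightarrow> (\<Sum>i<N. p x i) = 1"
    using p by (auto simp: prob_families_def N_def)
  have cp: "\<And>x. x \<in> B \<Longrightarrow> cert h x \<subseteq> {..<N} \<and> card (cert h x) = 2^h"
    using cert_props by (auto simp: B_def N_def)
  have fB: "finite B"
    by (rule finite_subset[OF _ finite_lists_length_eq[of "UNIV::bool set" N]]) (auto simp: B_def)
  have fc: "\<forall>x\<in>B. finite (cert h x)" using cp finite_subset by blast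
  have fP: "finite P" unfolding P_def using fB fc by auto
  have cardP: "card P = 2^h * card B" unfolding P_def using fB fc cp by simp
  obtain x0 where x0: "length x0 = N" "bal h x0" using bal_exists N_def by blast
  have "x0 \<in> B" using x0 by (simp add: B_def)
  hence "B \<noteq> {}" by auto
  hence cB: "card B > 0" using fB by (simp add: card_gt_0_iff)
  hence P0: "P \<noteq> {}" using cardP by (metis card.empty mult_is_0 power_not_zero zero_neq_numeral less_irrefl)
  have flP: "\<And>z. z \<in> P \<Longrightarrow> fl z \<in> P"
    using bal_flip by (auto simp: P_def B_def fl_def N_def)
  have flfl: "\<And>z. z \<in> P \<Longrightarrow> fl (fl z) = z"
  proof -
    fix z assume "z \<in> P"
    then obtain x i where z: "z = (x, i)" "x \<in> B" "i \<in> cert h x" by (auto simp: P_def)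
    have "i < length x" using cp z B_def by auto
    thus "fl (fl z) = z" by (simp add: z fl_def)
  qed
  have bij: "bij_betw fl P P"
    by (rule bij_betw_byWitness[of P fl fl]) (use flP flfl in auto)
  define q where "q = (\<lambda>(x::bool list, i::nat). p x i)"
  have qn: "\<And>z. z \<in> P \<Longrightarrow> 0 \<le> q z" using cp pn by (auto simp: P_def q_def B_def)
  have s1: "sum g P \<le> sum (\<lambda>z. (q z + q (fl z)) / 2) P"
  proof (rule sum_mono)
    fix z assume zP: "z \<in> P"
    show "g z \<le> (q z + q (fl z)) / 2"
      using arith_geo_mean_sqrt[OF qn[OF zP] qn[OF flP[OF zP]]]
      by (cases z) (simp add: g_def q_def fl_def)
  qed
  have s2: "sum (\<lambda>z. (q z + q (fl z)) / 2) P = (sum q P + sum (q \<circ> fl) P) / 2"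
    by (simp only: sum_divide_distrib[symmetric] sum.distrib comp_def)
  have s3: "sum (q \<circ> fl) P = sum q P" using sum.reindex_bij_betw[OF bij, of q] by simp
  have s4: "sum q P = (\<Sum>x\<in>B. \<Sum>i\<in>cert h x. p x i)" unfolding P_def q_def
    by (rule sum.Sigma[symmetric, OF fB fc])
  have s5: "(\<Sum>x\<in>B. \<Sum>i\<in>cert h x. p x i) \<le> (\<Sum>x\<in>B. \<Sum>i<N. p x i)"
  proof (rule sum_mono)
    fix x assume xB: "x \<in> B"
    show "(\<Sum>i\<in>cert h x. p x i) \<le> (\<Sum>i<N. p x i)"
      by (rule sum_mono2) (use cp[OF xB] pn xB B_def in auto)
  qed
  have s6: "(\<Sum>x\<in>B. \<Sum>i<N. p x i) = card B" using ps by (simp add: B_def)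
  have sg: "sum g P \<le> card P * (1 / 2^h)"
  proof -
    have t1: "sum (\<lambda>z. (q z + q (fl z)) / 2) P = sum q P" unfolding s2 s3 by simp
    have t2: "sum q P \<le> card B" using s4 s5 s6 by linarith
    have "sum g P \<le> card B" using s1 t1 t2 by linarith
    thus ?thesis by (simp add: cardP)
  qed
  have "\<exists>z\<in>P. g z \<le> 1 / 2^h"
  proof (rule ccontr)
    assume "\<not> ?thesis"
    hence lt: "\<forall>z\<in>P. 1 / 2^h < g z" by (simp add: not_le)
    have "sum (\<lambda>_. 1 / 2^h) P < sum g P" by (rule sum_strict_mono[OF fP P0]) (use lt in blast)
    thus False using sg by simp
  qed
  then obtain x i where "x \<in> B" "i \<in> cert h x" "g (x, i) \<le> 1 / 2^h" by (auto simp: P_def)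
  note xi = this
  have lx: "length x = 3^h" "bal h x" using xi(1) by (auto simp: B_def N_def)
  have "i < 3^h" using cp[OF xi(1)] xi(2) by (auto simp: N_def)
  moreover have "MAJ h (x[i := \<not> x!i]) \<noteq> MAJ h x" using bal_flip[OF lx xi(2)] by blast
  moreover have "sqrt (p x i * p (x[i := \<not> x!i]) i) \<le> 1 / 2^h" using xi(3) by (simp add: g_def)
  ultimately show ?thesis using lx by blast
qed

lemma inv_le: "0 < c \<Longrightarrow> ereal c \<le> t \<Longrightarrow> inverse t \<le> ereal (inverse c)"
  using ereal_inverse_antimono[of "ereal c" t] by simp

lemma inv_ge: "0 \<le> s \<Longrightarrow> s \<le> c \<Longrightarrow> 0 < c \<Longrightarrow> ereal (inverse c) \<le> inverse (ereal s)"
proof (cases "s = 0")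
  case True then show ?thesis by simp
next
  case False
  assume "0 \<le> s" "s \<le> c" "0 < c"
  then show ?thesis using ereal_inverse_antimono[of "ereal s" "ereal c"] False by simp
qed

lemma diff_idx_flip: "i < N \<Longrightarrow> length x = N \<Longrightarrow> diff_idx N x (x[i := \<not> x!i]) = {i}"
  by (auto simp: diff_idx_def nth_list_update)

lemma lower_both:
  assumes p: "p \<in> prob_families (3^h)"
  shows "ereal (2^h) \<le> (SUP xy \<in> diff_pairs (3^h) (MAJ h).
      inverse (ereal (\<Sum>i\<in>diff_idx (3^h) (fst xy) (snd xy). sqrt (p (fst xy) i * p (snd xy) i))))"
    and "ereal (2^h) \<le> (SUP xy \<in> diff_pairs (3^h) (MAJ h).
      inverse (SUP i \<in> diff_idx (3^h) (fst xy) (snd xy). ereal (sqrt (p (fst xy) i * p (snd xy) i))))"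
proof -
  obtain x i where xi: "length x = 3^h" "i < 3^h" "MAJ h (x[i := \<not> x!i]) \<noteq> MAJ h x"
     "sqrt (p x i * p (x[i := \<not> x!i]) i) \<le> 1 / 2^h"
    using lower_pair[OF p] by blast
  define y where "y = x[i := \<not> x!i]"
  have mem: "(x, y) \<in> diff_pairs (3^h) (MAJ h)" using xi by (auto simp: diff_pairs_def y_def)
  have di: "diff_idx (3^h) x y = {i}" using diff_idx_flip[OF xi(2,1)] by (simp add: y_def)
  have "ereal (inverse (1/2^h)) \<le> inverse (ereal (sqrt (p x i * p y i)))"
  proof (rule inv_ge)
    have ly: "length y = 3^h" using xi(1) by (simp add: y_def)
    have "0 \<le> p x i" "0 \<le> p y i" using p xi(1,2) ly by (auto simp: prob_families_def)
    thus "0 \<le> sqrt (p x i * p y i)" by simp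
    show "sqrt (p x i * p y i) \<le> 1 / 2^h" using xi(4) by (simp add: y_def)
  qed simp
  moreover have e: "ereal (inverse (1/2^h)) = ereal (2^h)" by simp
  ultimately have le: "ereal (2^h) \<le> inverse (ereal (sqrt (p x i * p y i)))" by (simp only:)
  show "ereal (2^h) \<le> (SUP xy \<in> diff_pairs (3^h) (MAJ h).
      inverse (ereal (\<Sum>i\<in>diff_idx (3^h) (fst xy) (snd xy). sqrt (p (fst xy) i * p (snd xy) i))))"
    by (rule SUP_upper2[OF mem]) (simp only: di fst_conv snd_conv sum.insert sum.empty finite.emptyI empty_iff add_0_right not_False_eq_True le)
  show "ereal (2^h) \<le> (SUP xy \<in> diff_pairs (3^h) (MAJ h).
      inverse (SUP i \<in> diff_idx (3^h) (fst xy) (snd xy). ereal (sqrt (p (fst xy) i * p (snd xy) i))))"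
  proof (rule SUP_upper2[OF mem])
    have s: "(SUP j \<in> {i}. ereal (sqrt (p x j * p y j))) = ereal (sqrt (p x i * p y i))" by simp
    show "ereal (2^h) \<le> inverse (SUP i \<in> diff_idx (3^h) (fst (x, y)) (snd (x, y)). ereal (sqrt (p (fst (x, y)) i * p (snd (x, y)) i)))"
      by (simp only: di fst_conv snd_conv s le)
  qed
qed

definition p0 :: "nat \<Rightarrow> bool list \<Rightarrow> nat \<Rightarrow> real" where
  "p0 h x i = (if i \<in> cert h x then 1 / 2^h else 0)"

lemma p0_mem: "p0 h \<in> prob_families (3^h)"
proof -
  have "(\<Sum>i<3^h. p0 h x i) = 1" if lx: "length x = 3^h" for x
  proof -
    have cp: "cert h x \<subseteq> {..<3^h}" "card (cert h x) = 2^h" using cert_props[OF lx] by auto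
    have "(\<Sum>i<3^h. p0 h x i) = (\<Sum>i\<in>cert h x. 1 / 2^h)"
      unfolding p0_def
    proof -
      have "(\<Sum>i<3^h. if i \<in> cert h x then (1::real) / 2^h else 0) = (\<Sum>i\<in>{..<3^h} \<inter> cert h x. 1 / 2^h)"
        by (rule sum.inter_restrict[symmetric]) simp
      also have "{..<3^h} \<inter> cert h x = cert h x" using cp by blast
      finally show "(\<Sum>i<3^h. if i \<in> cert h x then (1::real) / 2^h else 0) = (\<Sum>i\<in>cert h x. 1 / 2^h)" .
    qed
    also have "\<dots> = 1" using cp by simp
    finally show ?thesis .
  qed
  then show ?thesis by (auto simp: prob_families_def p0_def)
qed

lemma upper_pair:
  assumes "(x, y) \<in> diff_pairs (3^h) (MAJ h)"
  shows "\<exists>i \<in> diff_idx (3^h) x y. sqrt (p0 h x i * p0 h y i) = 1 / 2^h"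
proof -
  have l: "length x = 3^h" "length y = 3^h" "MAJ h x \<noteq> MAJ h y" using assms by (auto simp: diff_pairs_def)
  obtain i where i: "i \<in> cert h x" "i \<in> cert h y" "x ! i \<noteq> y ! i" using cert_inter[OF l] by blast
  have "i < 3^h" using cert_props[OF l(1)] i by auto
  hence "i \<in> diff_idx (3^h) x y" using i by (simp add: diff_idx_def)
  moreover have "sqrt (p0 h x i * p0 h y i) = 1 / 2^h" using i
    by (simp add: p0_def real_sqrt_mult power_divide real_sqrt_divide flip: power2_eq_square)
  ultimately show ?thesis by blast
qed

lemma upper_both:
  shows "(SUP xy \<in> diff_pairs (3^h) (MAJ h).
      inverse (ereal (\<Sum>i\<in>diff_idx (3^h) (fst xy) (snd xy). sqrt (p0 h (fst xy) i * p0 h (snd xy) i)))) \<le> ereal (2^h)"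
    and "(SUP xy \<in> diff_pairs (3^h) (MAJ h).
      inverse (SUP i \<in> diff_idx (3^h) (fst xy) (snd xy). ereal (sqrt (p0 h (fst xy) i * p0 h (snd xy) i)))) \<le> ereal (2^h)"
proof -
  have nn: "\<And>x i. 0 \<le> p0 h x i" by (simp add: p0_def)
  show "(SUP xy \<in> diff_pairs (3^h) (MAJ h).
      inverse (ereal (\<Sum>i\<in>diff_idx (3^h) (fst xy) (snd xy). sqrt (p0 h (fst xy) i * p0 h (snd xy) i)))) \<le> ereal (2^h)"
  proof (rule SUP_least)
    fix xy assume m: "xy \<in> diff_pairs (3^h) (MAJ h)"
    obtain x y where xy: "xy = (x, y)" by fastforce
    obtain i where i: "i \<in> diff_idx (3^h) x y" "sqrt (p0 h x i * p0 h y i) = 1 / 2^h"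
      using upper_pair m xy by blast
    have fin: "finite (diff_idx (3^h) x y)" by (simp add: diff_idx_def)
    have "1 / 2^h \<le> (\<Sum>i\<in>diff_idx (3^h) x y. sqrt (p0 h x i * p0 h y i))"
      using member_le_sum[OF i(1) _ fin, of "\<lambda>i. sqrt (p0 h x i * p0 h y i)"] i(2) nn by simp
    then show "inverse (ereal (\<Sum>i\<in>diff_idx (3^h) (fst xy) (snd xy). sqrt (p0 h (fst xy) i * p0 h (snd xy) i))) \<le> ereal (2^h)"
    proof -
      have "inverse (ereal (\<Sum>i\<in>diff_idx (3^h) x y. sqrt (p0 h x i * p0 h y i))) \<le> ereal (inverse (1/2^h))"
        by (rule inv_le) (use \<open>1 / 2^h \<le> _\<close> in auto)
      thus ?thesis by (simp add: xy)
    qed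
  qed
  show "(SUP xy \<in> diff_pairs (3^h) (MAJ h).
      inverse (SUP i \<in> diff_idx (3^h) (fst xy) (snd xy). ereal (sqrt (p0 h (fst xy) i * p0 h (snd xy) i)))) \<le> ereal (2^h)"
  proof (rule SUP_least)
    fix xy assume m: "xy \<in> diff_pairs (3^h) (MAJ h)"
    obtain x y where xy: "xy = (x, y)" by fastforce
    obtain i where i: "i \<in> diff_idx (3^h) x y" "sqrt (p0 h x i * p0 h y i) = 1 / 2^h"
      using upper_pair m xy by blast
    have "ereal (1 / 2^h) \<le> (SUP i \<in> diff_idx (3^h) x y. ereal (sqrt (p0 h x i * p0 h y i)))"
      using SUP_upper[OF i(1), of "\<lambda>i. ereal (sqrt (p0 h x i * p0 h y i))"] i(2) by simp
    then show "inverse (SUP i \<in> diff_idx (3^h) (fst xy) (snd xy). ereal (sqrt (p0 h (fst xy) i * p0 h (snd xy) i))) \<le> ereal (2^h)"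
    proof -
      have "inverse (SUP i \<in> diff_idx (3^h) x y. ereal (sqrt (p0 h x i * p0 h y i))) \<le> ereal (inverse (1/2^h))"
        by (rule inv_le) (use \<open>ereal (1 / 2^h) \<le> _\<close> in auto)
      thus ?thesis by (simp add: xy)
    qed
  qed
qed

theorem mainTheorem14:
  fixes h :: nat
  assumes "h \<ge> 1"
  shows "sumPI (3^h) (MAJ h) = ereal (2^h) \<and> maxPI (3^h) (MAJ h) = ereal (2^h)"
proof
  show "sumPI (3^h) (MAJ h) = ereal (2^h)" unfolding sumPI_def
  proof (rule antisym)
    show "(INF p \<in> prob_families (3^h). SUP xy \<in> diff_pairs (3^h) (MAJ h).
      inverse (ereal (\<Sum>i\<in>diff_idx (3^h) (fst xy) (snd xy). sqrt (p (fst xy) i * p (snd xy) i)))) \<le> ereal (2^h)"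
      by (rule INF_lower2[OF p0_mem]) (use upper_both(1)[of h] in simp)
    show "ereal (2^h) \<le> (INF p \<in> prob_families (3^h). SUP xy \<in> diff_pairs (3^h) (MAJ h).
      inverse (ereal (\<Sum>i\<in>diff_idx (3^h) (fst xy) (snd xy). sqrt (p (fst xy) i * p (snd xy) i))))"
      by (rule INF_greatest) (rule lower_both(1))
  qed
  show "maxPI (3^h) (MAJ h) = ereal (2^h)" unfolding maxPI_def
  proof (rule antisym)
    show "(INF p \<in> prob_families (3^h). SUP xy \<in> diff_pairs (3^h) (MAJ h).
      inverse (SUP i \<in> diff_idx (3^h) (fst xy) (snd xy). ereal (sqrt (p (fst xy) i * p (snd xy) i)))) \<le> ereal (2^h)"
      by (rule INF_lower2[OF p0_mem]) (use upper_both(2)[of h] in simp)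
    show "ereal (2^h) \<le> (INF p \<in> prob_families (3^h). SUP xy \<in> diff_pairs (3^h) (MAJ h).
      inverse (SUP i \<in> diff_idx (3^h) (fst xy) (snd xy). ereal (sqrt (p (fst xy) i * p (snd xy) i))))"
      by (rule INF_greatest) (rule lower_both(2))
  qed
qed

end
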